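(* Let $k\ge 1$, let $\pi$ be an input permutation for the $\mathfrak{D}^k\mathfrak{I}$ machine, and let $a<b<c$ be entries of $\pi$. Consider any sequence of legal operations applied to $\pi$, and consider the moment when $b$ is pushed into the increasing stack $I$. If at that moment any of the following holds: (1) $c$ is in $D_j$ and $a$ is in $D_l$ for some $l\le j$; (2) $c$ is in $D_j$ for some $j$, and $a$ is still in the input; (3) $c$ and $a$ are both still in the input, with $a$ following $c$ in $\pi$; then this sequence of operations does not produce the identity permutation as output (i.e. $\pi$ is not sorted by it).
   Context: The $\mathfrak{D}^k\mathfrak{I}$ machine consists of $k$ stacks $D_1,\dots,D_k$ (called decreasing stacks) followed in series by a stack $I$ (the increasing stack). The input permutation is read from left to right. At every moment the elements of each $D_i$ must be in decreasing order from top to bottom (the top element is the largest), and the elements of $I$ must be in increasing order from top to bottom (the top element is the smallest). The operations are: $d_0$: push the next element of the input into $D_1$; $d_i$ ($1\le i\le k-1$): pop the top of $D_i$ and push it into $D_{i+1}$; $d_k$: pop the top of $D_k$ and push it into $I$; $d_{k+1}$: pop the top of $I$ and append it to the right of the output. An operation is legal if it does not violate the order restrictions of the stacks; $d_{k+1}$ is considered legal if the popped element is the smallest among the elements not yet output, and also if no other operation is legal. The permutation is sorted by a sequence of operations if all its elements end in the output in increasing order. *)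

theory Defs
  imports Main
begin

text \<open>Configuration of the D^k I machine.  Stacks are lists whose head is the top.
  The decreasing stacks D_1..D_k are stored in the list dstk, D_i = dstk ! (i-1).\<close>

record mstate =
  inp  :: "nat list"
  dstk :: "nat list list"
  istk :: "nat list"
  outp :: "nat list"

definition init_state :: "nat \<Rightarrow> nat list \<Rightarrow> mstate" where
  "init_state k \<pi> = \<lparr>inp = \<pi>, dstk = replicate k [], istk = [], outp = []\<rparr>"

definition basic_step :: "nat \<Rightarrow> nat \<Rightarrow> mstate \<Rightarrow> mstate option" where
  "basic_step k i s =
    (if i = 0 then
       (case inp s of [] \<Rightarrow> None
        | x # rest \<Rightarrow>
            (let D1 = dstk s ! 0 in
             if D1 = [] \<or> hd D1 < x
             then Some (s\<lparr>inp := rest, dstk := (dstk s)[0 := x # D1]\<rparr>) else None))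
     else if i < k then
       (case dstk s ! (i - 1) of [] \<Rightarrow> None
        | x # rest \<Rightarrow>
            (let Dn = dstk s ! i in
             if Dn = [] \<or> hd Dn < x
             then Some (s\<lparr>dstk := ((dstk s)[i - 1 := rest])[i := x # Dn]\<rparr>) else None))
     else if i = k then
       (case dstk s ! (k - 1) of [] \<Rightarrow> None
        | x # rest \<Rightarrow>
            (if istk s = [] \<or> x < hd (istk s)
             then Some (s\<lparr>dstk := (dstk s)[k - 1 := rest], istk := x # istk s\<rparr>) else None))
     else None)"

definition remaining :: "mstate \<Rightarrow> nat set" where
  "remaining s = set (inp s) \<union> (\<Union>D\<in>set (dstk s). set D) \<union> set (istk s)"

text \<open>All operations d_0 .. d_{k+1} with the legality rule of the paper:
  d_{k+1} is legal if the popped element is the smallest not yet output,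
  or if no other operation is legal.\<close>
definition step :: "nat \<Rightarrow> nat \<Rightarrow> mstate \<Rightarrow> mstate option" where
  "step k i s =
    (if i \<le> k then basic_step k i s
     else if i = k + 1 then
       (case istk s of [] \<Rightarrow> None
        | x # rest \<Rightarrow>
            (if x = Min (remaining s) \<or> (\<forall>j\<le>k. basic_step k j s = None)
             then Some (s\<lparr>istk := rest, outp := outp s @ [x]\<rparr>) else None))
     else None)"

fun run :: "nat \<Rightarrow> nat list \<Rightarrow> mstate \<Rightarrow> mstate option" where
  "run k [] s = Some s"
| "run k (i # ops) s = (case step k i s of None \<Rightarrow> None | Some s' \<Rightarrow> run k ops s')"

end

theory Submission
  imports Defs "HOL-Library.Multiset"
begin

lemma step_cases:
  assumes "step k i s = Some s'" "k \<ge> 1"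
  shows "(\<exists>x rest. i = 0 \<and> inp s = x#rest \<and> (dstk s!0 \<noteq> [] \<longrightarrow> hd (dstk s!0) < x) \<and> s' = s\<lparr>inp := rest, dstk := (dstk s)[0 := x # dstk s!0]\<rparr>)
 \<or> (\<exists>x rest. 0 < i \<and> i < k \<and> dstk s!(i-1) = x#rest \<and> (dstk s!i \<noteq> [] \<longrightarrow> hd(dstk s!i) < x) \<and> s' = s\<lparr>dstk := ((dstk s)[i-1 := rest])[i := x # dstk s!i]\<rparr>)
 \<or> (\<exists>x rest. i = k \<and> dstk s!(k-1) = x#rest \<and> (istk s \<noteq> [] \<longrightarrow> x < hd (istk s)) \<and> s' = s\<lparr>dstk := (dstk s)[k-1 := rest], istk := x # istk s\<rparr>)
 \<or> (\<exists>x rest. i = k+1 \<and> istk s = x#rest \<and> s' = s\<lparr>istk := rest, outp := outp s @ [x]\<rparr>)"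
  using assms unfolding step_def basic_step_def
  by (auto simp: Let_def split: if_splits list.splits)

lemma run_append: "run k (xs @ ys) s = (case run k xs s of None \<Rightarrow> None | Some s' \<Rightarrow> run k ys s')"
  by (induction xs arbitrary: s) (auto split: option.splits)

lemma sum_upd: "i < length xs \<Longrightarrow> sum_list (map mset (xs[i:=y])) + mset (xs!i) = sum_list (map mset xs) + mset y"
proof -
  assume h: "i < length xs"
  have "sum_list (map mset xs) = sum_list (map mset (take i xs @ xs!i # drop (Suc i) xs))"
    using id_take_nth_drop[OF h] by metis
  then show ?thesis using h by (simp add: upd_conv_take_nth_drop algebra_simps)
qed

definition content :: "mstate \<Rightarrow> nat multiset" where
  "content s = mset (inp s) + sum_list (map mset (dstk s)) + mset (istk s) + mset (outp s)"

definition minv :: "nat \<Rightarrow> nat list \<Rightarrow> mstate \<Rightarrow> bool" where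
  "minv k \<pi> s \<longleftrightarrow> length (dstk s) = k \<and> (\<forall>D\<in>set (dstk s). sorted_wrt (>) D)
     \<and> sorted_wrt (<) (istk s) \<and> content s = mset \<pi> \<and> (\<exists>m. inp s = drop m \<pi>)"

lemma push_sorted: "sorted_wrt (>) D \<Longrightarrow> D = [] \<or> hd D < (x::nat) \<Longrightarrow> sorted_wrt (>) (x # D)"
  by (cases D) auto

lemma push_sorted_I: "sorted_wrt (<) D \<Longrightarrow> D = [] \<or> (x::nat) < hd D \<Longrightarrow> sorted_wrt (<) (x # D)"
  by (cases D) auto

lemma set_upd_sorted: "\<forall>D\<in>set xs. sorted_wrt (>) D \<Longrightarrow> sorted_wrt (>) (y::nat list) \<Longrightarrow> \<forall>D\<in>set (xs[i:=y]). sorted_wrt (>) D"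
  using set_update_subset_insert by fastforce

lemma sum_rep: "sum_list (replicate k ({#}::'a multiset)) = {#}"
  by (induct k) auto

lemma minv_init: "k \<ge> 1 \<Longrightarrow> minv k \<pi> (init_state k \<pi>)"
  unfolding minv_def init_state_def content_def
  by (auto intro: exI[of _ 0] simp: sum_rep)

lemma minv_step:
  assumes "step k i s = Some s'" "k \<ge> 1" "minv k \<pi> s"
  shows "minv k \<pi> s'"
  using step_cases[OF assms(1,2)]
proof (elim disjE exE conjE)
  fix x rest assume h: "i = 0" "inp s = x # rest" "dstk s ! 0 \<noteq> [] \<longrightarrow> hd (dstk s ! 0) < x"
    "s' = s\<lparr>inp := rest, dstk := (dstk s)[0 := x # dstk s ! 0]\<rparr>"
  have L: "0 < length (dstk s)" using assms minv_def by auto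
  have srt: "sorted_wrt (>) (x # dstk s ! 0)" using assms(3) h L unfolding minv_def
    by (intro push_sorted) auto
  have c: "content s' = content s"
    using sum_upd[OF L, of "x # dstk s ! 0"] h unfolding content_def by (simp add: algebra_simps)
  obtain m where m: "inp s = drop m \<pi>" using assms(3) minv_def by auto
  have "inp s' = drop (Suc m) \<pi>" using m h by (metis drop_Suc list.sel(3) select_convs(1) surjective tl_drop update_convs(1) update_convs(2))
  moreover have "\<forall>D\<in>set ((dstk s)[0 := x # dstk s ! 0]). sorted_wrt (>) D"
    apply (rule set_upd_sorted[OF _ srt])
    using assms(3) unfolding minv_def by auto
  ultimately show "minv k \<pi> s'" using assms(3) h c unfolding minv_def
    by auto
next
  fix x rest assume h: "0 < i" "i < k" "dstk s ! (i - 1) = x # rest" "dstk s ! i \<noteq> [] \<longrightarrow> hd (dstk s ! i) < x"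
    "s' = s\<lparr>dstk := ((dstk s)[i - 1 := rest])[i := x # dstk s ! i]\<rparr>"
  have L: "i - 1 < length (dstk s)" "i < length (dstk s)" using assms h minv_def by auto
  have s1: "sorted_wrt (>) (x # rest)" using assms(3) h L unfolding minv_def by (metis nth_mem)
  have srt: "sorted_wrt (>) (x # dstk s ! i)" using assms(3) h L unfolding minv_def
    by (intro push_sorted) auto
  have c1: "sum_list (map mset ((dstk s)[i - 1 := rest])) + mset (x # rest) = sum_list (map mset (dstk s)) + mset rest"
    using sum_upd[OF L(1), of rest] h by simp
  have c2: "sum_list (map mset (((dstk s)[i - 1 := rest])[i := x # dstk s ! i])) + mset (dstk s ! i) = sum_list (map mset ((dstk s)[i - 1 := rest])) + mset (x # dstk s ! i)"
    using sum_upd[of i "(dstk s)[i - 1 := rest]" "x # dstk s ! i"] L h by simp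
  have "sum_list (map mset (((dstk s)[i - 1 := rest])[i := x # dstk s ! i])) = sum_list (map mset (dstk s))"
    using c1 c2 by (simp add: algebra_simps)
  then have c: "content s' = content s" using h unfolding content_def by simp
  have "\<forall>D\<in>set (((dstk s)[i - 1 := rest])[i := x # dstk s ! i]). sorted_wrt (>) D"
    apply (rule set_upd_sorted[OF set_upd_sorted srt])
    using assms(3) s1 unfolding minv_def by auto
  then show ?thesis using assms(3) h c unfolding minv_def by auto
next
  fix x rest assume h: "i = k" "dstk s ! (k - 1) = x # rest" "istk s \<noteq> [] \<longrightarrow> x < hd (istk s)"
    "s' = s\<lparr>dstk := (dstk s)[k - 1 := rest], istk := x # istk s\<rparr>"
  have L: "k - 1 < length (dstk s)" using assms h minv_def by auto
  have s1: "sorted_wrt (>) (x # rest)" using assms(3) h L unfolding minv_def by (metis nth_mem)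
  have srt: "sorted_wrt (<) (x # istk s)" using assms(3) h unfolding minv_def
    by (intro push_sorted_I) auto
  have c: "content s' = content s"
    using sum_upd[OF L, of rest] h unfolding content_def by (simp add: algebra_simps)
  have "sorted_wrt (>) rest" using s1 by simp
  then have "\<forall>D\<in>set ((dstk s)[k - 1 := rest]). sorted_wrt (>) D"
    using assms(3) unfolding minv_def by (intro set_upd_sorted) auto
  then show ?thesis using assms(3) h srt c unfolding minv_def
    by auto
next
  fix x rest assume h: "i = k + 1" "istk s = x # rest" "s' = s\<lparr>istk := rest, outp := outp s @ [x]\<rparr>"
  then show ?thesis using assms(3) unfolding minv_def content_def by auto
qed

lemma minv_run: "run k ops s = Some s' \<Longrightarrow> k \<ge> 1 \<Longrightarrow> minv k \<pi> s \<Longrightarrow> minv k \<pi> s'"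
  by (induction ops arbitrary: s) (auto split: option.splits dest: minv_step)

lemma minv_distinct: "minv k \<pi> s \<Longrightarrow> distinct \<pi> \<Longrightarrow> distinct (inp s @ concat (dstk s) @ istk s @ outp s)"
  unfolding minv_def content_def
  by (subst mset_eq_imp_distinct_iff[of _ \<pi>]) (auto simp: mset_concat algebra_simps)

definition ahead :: "nat \<Rightarrow> nat \<Rightarrow> nat \<Rightarrow> mstate \<Rightarrow> bool" where
  "ahead k a c s \<longleftrightarrow> (\<exists>j<k. c \<in> set (dstk s ! j) \<and> (a \<in> set (inp s) \<or> (\<exists>l\<le>j. a \<in> set (dstk s ! l))))
     \<or> (\<exists>u v w. inp s = u @ c # v @ a # w)"

lemma hd_le_mem: "sorted_wrt (<) (I::nat list) \<Longrightarrow> b \<in> set I \<Longrightarrow> hd I \<le> b"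
  by (cases I) auto

lemma aheadI1: "j<k \<Longrightarrow> c\<in>set(dstk s!j) \<Longrightarrow> a \<in> set(inp s) \<Longrightarrow> ahead k a c s"
  unfolding ahead_def by blast
lemma aheadI2: "j<k \<Longrightarrow> c\<in>set(dstk s!j) \<Longrightarrow> l \<le> j \<Longrightarrow> a \<in> set(dstk s!l) \<Longrightarrow> ahead k a c s"
  unfolding ahead_def by blast
lemma aheadI3: "inp s = u@c#v@a#w \<Longrightarrow> ahead k a c s"
  unfolding ahead_def by blast
lemma aheadE:
  assumes "ahead k a c s"
  obtains (A1) j where "j<k" "c\<in>set(dstk s!j)" "a \<in> set(inp s)"
  | (A2) j l where "j<k" "c\<in>set(dstk s!j)" "l \<le> j" "a \<in> set(dstk s!l)"
  | (A3) u v w where "inp s = u@c#v@a#w"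
  using assms unfolding ahead_def by blast

lemma ahead_step:
  assumes st: "step k i s = Some s'" and k: "k \<ge> 1" and iv: "minv k \<pi> s" and ah: "ahead k a c s"
    and ab: "a < b" and bc: "b < c"
    and bpos: "b \<in> set (istk s) \<or> (dstk s!(k-1) \<noteq> [] \<and> hd (dstk s!(k-1)) = b)"
  shows "ahead k a c s'"
  using step_cases[OF st k]
proof (elim disjE exE conjE)
  fix x rest assume h: "i = 0" "inp s = x # rest" "dstk s ! 0 \<noteq> [] \<longrightarrow> hd (dstk s ! 0) < x"
    "s' = s\<lparr>inp := rest, dstk := (dstk s)[0 := x # dstk s ! 0]\<rparr>"
  have len: "length (dstk s) = k" using iv minv_def by auto
  have D: "\<And>j. j < k \<Longrightarrow> set (dstk s ! j) \<subseteq> set (dstk s' ! j)"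
    using h len by (auto simp: nth_list_update)
  have D0: "x \<in> set (dstk s' ! 0)" using h len k by (auto simp: nth_list_update)
  have I: "inp s' = rest" using h by simp
  from ah show ?thesis
  proof (cases rule: aheadE)
    case (A1 j)
    then have "a = x \<or> a \<in> set rest" using h by auto
    then show ?thesis using D0 I D[of j] A1 by (metis aheadI1 aheadI2 subsetD zero_le)
  next
    case (A2 j l)
    then show ?thesis using D[of j] D[of l] by (meson aheadI2 subsetD le_less_trans)
  next
    case (A3 u v w)
    show ?thesis
    proof (cases u)
      case Nil
      then have "x = c" "rest = v @ a # w" using A3 h by auto
      then show ?thesis using D0 I k by (intro aheadI1[of 0]) auto
    next
      case (Cons y u')
      then have "rest = u' @ c # v @ a # w" using A3 h by auto
      then show ?thesis using I by (intro aheadI3) auto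
    qed
  qed
next
  fix x rest assume h: "0 < i" "i < k" "dstk s ! (i - 1) = x # rest" "dstk s ! i \<noteq> [] \<longrightarrow> hd (dstk s ! i) < x"
    "s' = s\<lparr>dstk := ((dstk s)[i - 1 := rest])[i := x # dstk s ! i]\<rparr>"
  have len: "length (dstk s) = k" using iv minv_def by auto
  have srt: "sorted_wrt (>) (x # rest)" using iv h len unfolding minv_def by (metis nth_mem less_imp_diff_less)
  have Dn: "\<And>j. j < k \<Longrightarrow> dstk s' ! j = (if j = i then x # dstk s ! i else if j = i - 1 then rest else dstk s ! j)"
    using h len by (auto simp: nth_list_update)
  have I: "inp s' = inp s" using h by simp
  have mv: "\<And>y j. j < k \<Longrightarrow> y \<in> set (dstk s ! j) \<Longrightarrow>
      (j = i - 1 \<and> y = x \<and> y \<in> set (dstk s' ! i)) \<or> y \<in> set (dstk s' ! j)"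
    using h Dn by auto
  have ac: "a \<noteq> c" using ab bc by auto
  from ah show ?thesis
  proof (cases rule: aheadE)
    case (A1 j)
    then show ?thesis using mv[OF A1(1,2)] I h by (metis aheadI1)
  next
    case (A2 j l)
    note j = A2(1,2) and l = A2(3,4)
    have lk: "l < k" using l j by auto
    show ?thesis
    proof (cases "l = i - 1 \<and> a = x")
      case True
      then have ai: "a \<in> set (dstk s' ! i)" using Dn[of i] h by auto
      have "j \<noteq> i - 1"
      proof
        assume "j = i - 1"
        then have "c \<in> set rest" using j h True ac by auto
        then have "c < x" using srt by auto
        then show False using True ab bc by auto
      qed
      then have ji: "i \<le> j" using True l by auto
      have "c \<in> set (dstk s' ! j)" using mv[OF j] True ac \<open>j \<noteq> i - 1\<close> by auto
      then show ?thesis using ji ai j by (metis aheadI2)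
    next
      case False
      then have al: "a \<in> set (dstk s' ! l)" using mv[OF lk l(2)] by auto
      show ?thesis
      proof (cases "j = i - 1 \<and> c = x")
        case True
        then have "c \<in> set (dstk s' ! i)" using Dn[of i] h by auto
        then show ?thesis using al l h True by (intro aheadI2[of i k c s' l a]) auto
      next
        case False
        then show ?thesis using mv[OF j] al l j by (metis aheadI2)
      qed
    qed
  next
    case (A3 u v w)
    then show ?thesis using I by (metis aheadI3)
  qed
next
  fix x rest assume h: "i = k" "dstk s ! (k - 1) = x # rest" "istk s \<noteq> [] \<longrightarrow> x < hd (istk s)"
    "s' = s\<lparr>dstk := (dstk s)[k - 1 := rest], istk := x # istk s\<rparr>"
  have len: "length (dstk s) = k" using iv minv_def by auto
  have srt: "sorted_wrt (>) (x # rest)" using iv h len k unfolding minv_def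
    by (metis nth_mem diff_less zero_less_one less_le_trans)
  have xc: "x \<noteq> c"
  proof
    assume "x = c"
    show False using bpos
    proof
      assume "b \<in> set (istk s)"
      then have "hd (istk s) \<le> b" "istk s \<noteq> []" using iv hd_le_mem unfolding minv_def by auto
      then show False using h \<open>x = c\<close> bc by auto
    next
      assume "dstk s ! (k - 1) \<noteq> [] \<and> hd (dstk s ! (k - 1)) = b"
      then show False using h \<open>x = c\<close> bc by auto
    qed
  qed
  have Dn: "\<And>j. j < k \<Longrightarrow> dstk s' ! j = (if j = k - 1 then rest else dstk s ! j)"
    using h len by (auto simp: nth_list_update)
  have I: "inp s' = inp s" using h by simp
  have mv: "\<And>y j. j < k \<Longrightarrow> y \<in> set (dstk s ! j) \<Longrightarrow> y \<noteq> x \<or> j \<noteq> k - 1 \<Longrightarrow> y \<in> set (dstk s' ! j)"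
    using h Dn by auto
  from ah show ?thesis
  proof (cases rule: aheadE)
    case (A1 j)
    then show ?thesis using mv[OF A1(1,2)] xc I by (metis aheadI1)
  next
    case (A2 j l)
    note j = A2(1,2) and l = A2(3,4)
    have lk: "l < k" using l j by auto
    have c': "c \<in> set (dstk s' ! j)" using mv[OF j] xc by auto
    have "a \<noteq> x \<or> l \<noteq> k - 1"
    proof (rule ccontr)
      assume "\<not> (a \<noteq> x \<or> l \<noteq> k - 1)"
      then have ax: "a = x" "l = k - 1" by auto
      then have "j = k - 1" using l j by auto
      then have "c \<in> set rest" using j h xc by auto
      then show False using srt ax ab bc by auto
    qed
    then show ?thesis using mv[OF lk l(2)] c' j l by (metis aheadI2)
  next
    case (A3 u v w)
    then show ?thesis using I by (metis aheadI3)
  qed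
next
  fix x rest assume h: "i = k + 1" "istk s = x # rest" "s' = s\<lparr>istk := rest, outp := outp s @ [x]\<rparr>"
  then show ?thesis using ah unfolding ahead_def by simp
qed

lemma outp_step: "step k i s = Some s' \<Longrightarrow> k \<ge> 1 \<Longrightarrow> \<exists>zs. outp s' = outp s @ zs"
  using step_cases[of k i s s'] by auto

lemma ahead_loc: "ahead k a c s \<Longrightarrow> a \<in> set (inp s) \<or> (\<exists>l<k. a \<in> set (dstk s ! l))"
  by (erule aheadE) auto

lemma not_out:
  assumes "minv k \<pi> s" "distinct \<pi>" "ahead k a c s"
  shows "a \<notin> set (outp s)" "a \<notin> set (istk s)"
proof -
  have d: "distinct (inp s @ concat (dstk s) @ istk s @ outp s)" using minv_distinct assms by blast
  have len: "length (dstk s) = k" using assms minv_def by auto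
  have "a \<in> set (inp s) \<or> a \<in> set (concat (dstk s))"
    using ahead_loc[OF assms(3)] len by (auto intro: nth_mem)
  then show "a \<notin> set (outp s)" "a \<notin> set (istk s)" using d by auto
qed

definition PP :: "nat \<Rightarrow> nat list \<Rightarrow> nat \<Rightarrow> nat \<Rightarrow> nat \<Rightarrow> mstate \<Rightarrow> bool" where
  "PP k \<pi> a b c s \<longleftrightarrow> minv k \<pi> s \<and> ((b \<in> set (istk s) \<and> ahead k a c s) \<or> (\<exists>xs ys. outp s = xs @ b # ys \<and> a \<notin> set xs))"

lemma PP_step:
  assumes st: "step k i s = Some s'" and k: "k \<ge> 1" and d: "distinct \<pi>" and ab: "a < b" and bc: "b < c"
    and P: "PP k \<pi> a b c s"
  shows "PP k \<pi> a b c s'"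
proof -
  have iv: "minv k \<pi> s" and iv': "minv k \<pi> s'" using P minv_step[OF st k] unfolding PP_def by auto
  obtain zs where zs: "outp s' = outp s @ zs" using outp_step[OF st k] by blast
  from P consider (A) "b \<in> set (istk s)" "ahead k a c s" | (B) xs ys where "outp s = xs @ b # ys" "a \<notin> set xs"
    unfolding PP_def by blast
  then show ?thesis
  proof cases
    case B
    then show ?thesis using iv' zs unfolding PP_def by auto
  next
    case A
    have ah': "ahead k a c s'" using ahead_step[OF st k iv A(2) ab bc] A(1) by blast
    have ao: "a \<notin> set (outp s)" using not_out[OF iv d A(2)] by blast
    show ?thesis
    proof (cases "\<exists>rest. i = k + 1 \<and> istk s = b # rest")
      case True
      then obtain rest where r: "i = k+1" "istk s = b # rest" by blast
      then have "outp s' = outp s @ [b]" using step_cases[OF st k] by auto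
      then show ?thesis using iv' ao unfolding PP_def by blast
    next
      case False
      have "b \<in> set (istk s')" using step_cases[OF st k] A(1) False by auto
      then show ?thesis using iv' ah' unfolding PP_def by blast
    qed
  qed
qed

lemma PP_run: "run k ops s = Some s' \<Longrightarrow> k \<ge> 1 \<Longrightarrow> distinct \<pi> \<Longrightarrow> a < b \<Longrightarrow> b < c \<Longrightarrow> PP k \<pi> a b c s \<Longrightarrow> PP k \<pi> a b c s'"
  by (induction ops arbitrary: s) (auto split: option.splits dest: PP_step)

theorem mainTheorem2:
  fixes k :: nat and \<pi> :: "nat list" and a b c :: nat
    and ops1 ops2 :: "nat list" and s sf :: mstate
  assumes "k \<ge> 1"
    and "distinct \<pi>" and "set \<pi> = {1..length \<pi>}"
    and "a \<in> set \<pi>" and "b \<in> set \<pi>" and "c \<in> set \<pi>"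
    and "a < b" and "b < c"
    and "run k ops1 (init_state k \<pi>) = Some s"
    and "dstk s ! (k - 1) \<noteq> []" and "hd (dstk s ! (k - 1)) = b"
    and "run k (ops1 @ k # ops2) (init_state k \<pi>) = Some sf"
    and "(\<exists>j l. 1 \<le> l \<and> l \<le> j \<and> j \<le> k \<and> c \<in> set (dstk s ! (j - 1)) \<and> a \<in> set (dstk s ! (l - 1)))
       \<or> (\<exists>j. 1 \<le> j \<and> j \<le> k \<and> c \<in> set (dstk s ! (j - 1)) \<and> a \<in> set (inp s))
       \<or> (c \<in> set (inp s) \<and> a \<in> set (inp s) \<and>
          (\<exists>i j. i < j \<and> j < length \<pi> \<and> \<pi> ! i = c \<and> \<pi> ! j = a))"
  shows "outp sf \<noteq> [1..<length \<pi> + 1]"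
proof
  assume out: "outp sf = [1..<length \<pi> + 1]"
  note k = assms(1) and d = assms(2) and ab = assms(7) and bc = assms(8)
  have iv: "minv k \<pi> s" using minv_run[OF assms(9) k minv_init[OF k]] .
  obtain s1 where s1: "step k k s = Some s1" and r2: "run k ops2 s1 = Some sf"
    using assms(12) assms(9) by (auto simp: run_append split: option.splits)
  have ah: "ahead k a c s"
    using assms(13)
  proof (elim disjE exE conjE)
    fix j l assume "1 \<le> l" "l \<le> j" "j \<le> k" "c \<in> set (dstk s ! (j - 1))" "a \<in> set (dstk s ! (l - 1))"
    then show ?thesis by (intro aheadI2[of "j-1" k c s "l-1" a]) auto
  next
    fix j assume "1 \<le> j" "j \<le> k" "c \<in> set (dstk s ! (j - 1))" "a \<in> set (inp s)"
    then show ?thesis by (intro aheadI1[of "j-1" k c s a]) auto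
  next
    fix i j assume cin: "c \<in> set (inp s)" and ain: "a \<in> set (inp s)" and ij: "i < j" "j < length \<pi>"
      and pc: "\<pi> ! i = c" and pa: "\<pi> ! j = a"
    obtain m where m: "inp s = drop m \<pi>" using iv minv_def by auto
    obtain t where t: "t < length (drop m \<pi>)" "drop m \<pi> ! t = c" using cin m by (metis in_set_conv_nth)
    have "\<pi> ! (m + t) = c" "m + t < length \<pi>" using t by auto
    then have mt: "m + t = i" using pc d ij nth_eq_iff_index_eq by fastforce
    let ?D = "drop m \<pi>"
    have "?D = take t ?D @ ?D ! t # drop (Suc t) ?D" using t id_take_nth_drop by blast
    moreover have "drop (Suc t) ?D = drop (Suc i) \<pi>" using mt by (simp add: add.commute)
    moreover have "a \<in> set (drop (Suc i) \<pi>)"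
    proof -
      have "drop (Suc i) \<pi> ! (j - Suc i) = a" using ij pa by simp
      moreover have "j - Suc i < length (drop (Suc i) \<pi>)" using ij by simp
      ultimately show ?thesis by (metis nth_mem)
    qed
    then obtain v w where "drop (Suc i) \<pi> = v @ a # w" by (meson split_list)
    ultimately have "inp s = take t ?D @ c # v @ a # w" using m t by simp
    then show ?thesis by (rule aheadI3)
  qed
  have bpos: "b \<in> set (istk s) \<or> (dstk s!(k-1) \<noteq> [] \<and> hd (dstk s!(k-1)) = b)" using assms(10,11) by blast
  have ah1: "ahead k a c s1" using ahead_step[OF s1 k iv ah ab bc bpos] .
  have b1: "b \<in> set (istk s1)" using step_cases[OF s1 k] assms(10,11) k by auto
  have iv1: "minv k \<pi> s1" using minv_step[OF s1 k iv] .
  have "PP k \<pi> a b c s1" using iv1 b1 ah1 unfolding PP_def by blast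
  then have P: "PP k \<pi> a b c sf" using PP_run[OF r2 k d ab bc] by blast
  have ivf: "minv k \<pi> sf" using P PP_def by auto
  have aL: "a \<in> set [1..<length \<pi> + 1]" using assms(3,4) by auto
  from P consider (A) "ahead k a c sf" | (B) xs ys where "outp sf = xs @ b # ys" "a \<notin> set xs"
    unfolding PP_def by blast
  then show False
  proof cases
    case A
    then show False using not_out[OF ivf d A] out aL by simp
  next
    case B
    define L where "L = [1..<length \<pi> + 1]"
    have lenL: "length L = length \<pi>" by (simp add: L_def del: upt_Suc)
    have Lnth: "\<And>q. q < length \<pi> \<Longrightarrow> L ! q = q + 1" unfolding L_def by (subst nth_upt) auto
    have e: "L = xs @ b # ys" using B(1) out L_def by metis
    have lx: "length xs < length \<pi>" using lenL e by (simp add: length_append)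
    have "L ! length xs = b" using e by simp
    then have lb: "length xs + 1 = b" using lx Lnth by simp
    have a1: "1 \<le> a" using assms(3,4) by auto
    have i1: "a - 1 < length xs" using a1 ab lb by linarith
    have "L ! (a - 1) = a" using Lnth[of "a - 1"] a1 i1 lx by simp
    moreover have "L ! (a - 1) = xs ! (a - 1)" using e i1 by (simp add: nth_append)
    ultimately have "a \<in> set xs" using i1 by (metis nth_mem)
    then show False using B by simp
  qed
qed

end
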